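(* Let $T>0$ and consider, on $[0,T]$, the one-dimensional diffusion $dX_t=\alpha(X_t)\,dt+dW_t$, $X_0\sim h^0$, with $\alpha=A'$, under the standing assumptions (a) and (b) of the context, and let $h,\phi,\mathcal{Z}_h,\mathcal{Z}^+_h,l_Y,M,m,\Delta,\mathcal{M}_\lambda$ be as in the context. Let $\mathcal{P}$ be the probability measure on (path, finite point set $\psi\subset[0,T]$) defined by $$\mathcal{P}(dX,d\psi)\propto \mathcal{Z}^+_h(dX)\cdot \mathcal{M}_{\Delta(X)}(d\psi)\cdot \exp(-m(X)T)\prod_{g\in\psi}\frac{M(X)-\phi(X_g)}{\Delta(X)}.$$ For any $\psi$, the conditional law $\mathcal{P}(\cdot\mid\psi)$ over paths has density with respect to $\mathcal{Z}_h$ given by $$\frac{d\mathcal{P}(X\mid\psi)}{d\mathcal{Z}_h}\propto l_Y(X_S)\cdot\exp(-M(X)T)\cdot\prod_{g\in\psi}\big(M(X)-\phi(X_g)\big).$$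
   Context: Standing assumptions: (a) $c:=\int_{\mathbb{R}}\int_{\mathbb{R}} h^0(u_1)\exp\!\big(A(u_2)-A(u_1)-\tfrac{(u_2-u_1)^2}{2T}\big)\,du_2\,du_1<\infty$, where $h^0$ is a probability density on $\mathbb{R}$; (b) there is a constant $\alpha^\downarrow$ with $\alpha^\downarrow\le \tfrac12(\alpha(x)^2+\alpha'(x))$ for all $x$. Define $h(u_1,u_2)=\tfrac1c h^0(u_1)\exp\!\big(A(u_2)-A(u_1)-\tfrac{(u_2-u_1)^2}{2T}\big)$ and $\phi(x)=\tfrac12(\alpha(x)^2+\alpha'(x))-\alpha^\downarrow\ge0$. $\mathcal{Z}_h$ is the law of the $h$-biased Brownian bridge on $[0,T]$: draw $(X_0,X_T)$ from $h$, then connect by a Brownian bridge. Observations at times $S=\{0=s_1<\dots<s_{|S|}=T\}$ have likelihood $l_Y(X_S)=\prod_i l(y_i\mid X_{s_i})$, and $\frac{d\mathcal{Z}^+_h}{d\mathcal{Z}_h}(X)\propto l_Y(X_S)$. $M(X),m(X)$ are path functionals with $0\le m(X)\le\phi(X_t)\le M(X)$ for all $t\in[0,T]$ and $\Delta(X)=M(X)-m(X)>0$. $\mathcal{M}_\lambda$ is the law of a homogeneous rate-$\lambda$ Poisson process on $[0,T]$. *)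

theory Defs
  imports "HOL-Probability.Probability"
begin

text \<open>Normalisation of a finite non-zero measure to a probability measure
  (used to render the proportionality sign in the paper).\<close>
definition normalize_measure :: "'a measure \<Rightarrow> 'a measure" where
  "normalize_measure \<mu> = scale_measure (1 / emeasure \<mu> (space \<mu>)) \<mu>"

definition gauss_kernel :: "real \<Rightarrow> real \<Rightarrow> real" where
  "gauss_kernel s z = exp (- (z\<^sup>2) / (2 * s)) / sqrt (2 * pi * s)"

definition path_space :: "real \<Rightarrow> (real \<Rightarrow> real) measure" where
  "path_space T = restrict_space (Pi\<^sub>M UNIV (\<lambda>_. borel)) {X. continuous_on {0..T} X}"

text \<open>Raw randomness for a point process on [0,T]: a number of points and an iid
  sequence of uniform positions in [0,T].\<close>
definition unif_seq :: "real \<Rightarrow> (nat \<Rightarrow> real) measure" where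
  "unif_seq T = Pi\<^sub>M UNIV (\<lambda>_. uniform_measure (restrict_space lborel {0..T}) {0..T})"

definition enum_pts :: "nat \<times> (nat \<Rightarrow> real) \<Rightarrow> real set" where
  "enum_pts p = (snd p) ` {..<fst p}"

text \<open>Measurable space of finite point sets in [0,T]: the final sigma algebra
  with respect to the enumeration map.\<close>
definition psi_space :: "real \<Rightarrow> real set measure" where
  "psi_space T = sigma {\<psi>. finite \<psi> \<and> \<psi> \<subseteq> {0..T}}
     {B. B \<subseteq> {\<psi>. finite \<psi> \<and> \<psi> \<subseteq> {0..T}} \<and>
         enum_pts -` B \<inter> space (count_space UNIV \<Otimes>\<^sub>M unif_seq T)
           \<in> sets (count_space UNIV \<Otimes>\<^sub>M unif_seq T)}"

definition poisson_pp :: "real \<Rightarrow> real \<Rightarrow> real set measure" where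
  "poisson_pp T rate =
     distr (measure_pmf (poisson_pmf (rate * T)) \<Otimes>\<^sub>M unif_seq T) (psi_space T) enum_pts"

end

theory Submission
  imports Defs
begin


lemma exp_ge_term: fixes x :: real assumes "0 \<le> x" shows "x ^ n / fact n \<le> exp x"
proof -
  have s: "summable (\<lambda>n. x ^ n / fact n)" using summable_exp[of x] by (simp add: divide_inverse mult.commute)
  have "x ^ n / fact n \<le> (\<Sum>n. x ^ n / fact n)"
    using sum_le_suminf[OF s, of "{n}"] assms by auto
  also have "\<dots> = exp x" by (simp add: exp_def field_simps)
  finally show ?thesis .
qed

lemma U1_space: "space (uniform_measure (restrict_space lborel {0..T}) {0..T}) = {0..(T::real)}"
  by (simp add: space_restrict_space)

lemma U1_prob: "0 < T \<Longrightarrow> prob_space (uniform_measure (restrict_space lborel {0..T}) {0..(T::real)})"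
  by (intro prob_space_uniform_measure) (auto simp: emeasure_restrict_space)

lemma U_prob: "0 < T \<Longrightarrow> prob_space (unif_seq T)"
  unfolding unif_seq_def by (intro prob_space_PiM U1_prob)

lemma U_space: "space (unif_seq T) = UNIV \<rightarrow> {0..T}"
  unfolding unif_seq_def by (simp add: space_PiM U1_space PiE_def)

lemma U1_sets: "sets (uniform_measure (restrict_space lborel {0..T}) {0..(T::real)}) = sets (restrict_space borel {0..T})"
  by (simp add: sets_restrict_space)


abbreviation "Om T \<equiv> {\<psi>::real set. finite \<psi> \<and> \<psi> \<subseteq> {0..T}}"

lemma psi_space_sets: "sets (psi_space T) = sigma_sets (Om T)
     {B. B \<subseteq> Om T \<and>
         enum_pts -` B \<inter> space (count_space UNIV \<Otimes>\<^sub>M unif_seq T)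
           \<in> sets (count_space UNIV \<Otimes>\<^sub>M unif_seq T)}"
  unfolding psi_space_def by (rule sets_measure_of) auto

lemma psi_space_space: "space (psi_space T) = Om T"
  unfolding psi_space_def by (rule space_measure_of) auto

lemma enum_in_Om: "u \<in> space (unif_seq T) \<Longrightarrow> enum_pts (n, u) \<in> Om T"
  by (auto simp: enum_pts_def U_space)

lemma enum_meas: "enum_pts \<in> measurable (count_space UNIV \<Otimes>\<^sub>M unif_seq T) (psi_space T)"
  unfolding psi_space_def
proof (rule measurable_measure_of)
  show "enum_pts \<in> space (count_space UNIV \<Otimes>\<^sub>M unif_seq T) \<rightarrow> Om T"
    using enum_in_Om by (auto simp: space_pair_measure)
qed auto

lemma final_meas:
  fixes G :: "real set \<Rightarrow> 'b::topological_space"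
  assumes "(\<lambda>p. G (enum_pts p)) \<in> borel_measurable (count_space UNIV \<Otimes>\<^sub>M unif_seq T)"
  shows "G \<in> borel_measurable (psi_space T)"
proof (rule measurableI)
  fix A :: "'b set" assume A: "A \<in> sets borel"
  let ?M = "count_space UNIV \<Otimes>\<^sub>M unif_seq T"
  have "enum_pts -` (G -` A \<inter> Om T) \<inter> space ?M = (\<lambda>p. G (enum_pts p)) -` A \<inter> space ?M"
    using enum_in_Om by (auto simp: space_pair_measure)
  also have "\<dots> \<in> sets ?M" using measurable_sets[OF assms A] .
  finally show "G -` A \<inter> space (psi_space T) \<in> sets (psi_space T)"
    unfolding psi_space_sets psi_space_space by (intro sigma_sets.Basic) auto
qed auto

lemma final_meas':
  fixes G :: "real set \<Rightarrow> 'b::topological_space"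
  assumes "\<And>n. (\<lambda>u. G (enum_pts (n, u))) \<in> borel_measurable (unif_seq T)"
  shows "G \<in> borel_measurable (psi_space T)"
proof -
  have "(\<lambda>p. G (enum_pts (fst p, snd p))) \<in> borel_measurable (count_space UNIV \<Otimes>\<^sub>M unif_seq T)"
  proof (rule measurable_compose_countable'[where I=UNIV and g=fst and f="\<lambda>n p. G (enum_pts (n, snd p))"])
    fix n :: nat
    show "(\<lambda>p. G (enum_pts (n, snd p))) \<in> borel_measurable (count_space UNIV \<Otimes>\<^sub>M unif_seq T)"
      by (rule measurable_compose[OF measurable_snd assms])
  qed auto
  then show ?thesis by (intro final_meas) simp
qed


lemma path_space_space: "space (path_space T) = {X. continuous_on {0..T} X}"
  unfolding path_space_def by (simp add: space_restrict_space space_PiM)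

lemma eval_meas_const[measurable]: "(\<lambda>X. X t) \<in> borel_measurable (path_space T)"
  unfolding path_space_def
  by (rule measurable_restrict_space1) (rule measurable_component_singleton, simp)

lemma approx_pt:
  fixes T t :: real and k :: nat
  assumes T: "0 < T" and t: "t \<in> {0..T}"
  defines "q \<equiv> T * real (nat \<lfloor>real (Suc k) * t / T\<rfloor>) / real (Suc k)"
  shows "q \<in> {0..T}" "t - T / real (Suc k) \<le> q" "q \<le> t"
proof -
  let ?y = "real (Suc k) * t / T"
  have y0: "0 \<le> ?y" using t T by auto
  have y1: "?y \<le> real (Suc k)" using t T by (auto simp: field_simps intro!: add_mono mult_right_mono)
  have fl: "real (nat \<lfloor>?y\<rfloor>) = real_of_int \<lfloor>?y\<rfloor>" using y0 by simp
  have a: "real_of_int \<lfloor>?y\<rfloor> \<le> ?y" "?y - 1 < real_of_int \<lfloor>?y\<rfloor>" by linarith+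
  have b: "0 \<le> real_of_int \<lfloor>?y\<rfloor>" using y0 by simp
  have nz: "T + T * real k \<noteq> 0" using T by (metis add_pos_nonneg mult_nonneg_nonneg of_nat_0_le_iff less_le order.strict_iff_not)
  have qe: "q = T * real_of_int \<lfloor>?y\<rfloor> / real (Suc k)" unfolding q_def fl ..
  have "q \<le> T * ?y / real (Suc k)" unfolding qe using a T
    by (intro divide_right_mono mult_left_mono) auto
  also have "\<dots> = t" using T nz by (simp add: field_simps)
  finally show "q \<le> t" .
  have "T * (?y - 1) / real (Suc k) \<le> q" unfolding qe using a T
    by (intro divide_right_mono mult_left_mono) auto
  moreover have "T * (?y - 1) / real (Suc k) = t - T / real (Suc k)" using T nz by (simp add: field_simps)
  ultimately show "t - T / real (Suc k) \<le> q" by simp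
  show "q \<in> {0..T}" using \<open>q \<le> t\<close> t b T unfolding qe by auto
qed

lemma eval_meas:
  assumes T: "0 < T"
  shows "(\<lambda>p. fst p (snd p)) \<in> borel_measurable (path_space T \<Otimes>\<^sub>M restrict_space borel {0..T})"
proof (rule borel_measurable_LIMSEQ_real)
  let ?M = "path_space T \<Otimes>\<^sub>M restrict_space borel {0..T}"
  let ?q = "\<lambda>k t. T * real (nat \<lfloor>real (Suc k) * t / T\<rfloor>) / real (Suc k)"
  fix k :: nat
  show "(\<lambda>p. fst p (?q k (snd p))) \<in> borel_measurable ?M"
  proof (rule measurable_compose_countable'[where I=UNIV and g="\<lambda>p. nat \<lfloor>real (Suc k) * snd p / T\<rfloor>"
        and f="\<lambda>j p. fst p (T * real j / real (Suc k))"])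
    fix j :: nat
    show "(\<lambda>p. fst p (T * real j / real (Suc k))) \<in> borel_measurable ?M"
      by measurable
  next
    have "(\<lambda>t. nat \<lfloor>real (Suc k) * t / T\<rfloor>) \<in> borel \<rightarrow>\<^sub>M count_space UNIV"
      by measurable
    then have "(\<lambda>t. nat \<lfloor>real (Suc k) * t / T\<rfloor>) \<in> restrict_space borel {0..T} \<rightarrow>\<^sub>M count_space UNIV"
      by (rule measurable_restrict_space1)
    then show "(\<lambda>p. nat \<lfloor>real (Suc k) * snd p / T\<rfloor>) \<in> ?M \<rightarrow>\<^sub>M count_space UNIV"
      by (rule measurable_compose[OF measurable_snd])
  qed auto
next
  let ?M = "path_space T \<Otimes>\<^sub>M restrict_space borel {0..T}"
  let ?q = "\<lambda>k t. T * real (nat \<lfloor>real (Suc k) * t / T\<rfloor>) / real (Suc k)"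
  fix p assume p: "p \<in> space ?M"
  then have c: "continuous_on {0..T} (fst p)" and t: "snd p \<in> {0..T}"
    by (auto simp: space_pair_measure path_space_space space_restrict_space)
  have lim0: "(\<lambda>k. T / real (Suc k)) \<longlonglongrightarrow> 0"
    using tendsto_mult[OF tendsto_const[of T] LIMSEQ_inverse_real_of_nat] by (simp add: divide_inverse)
  have "(\<lambda>k. ?q k (snd p)) \<longlonglongrightarrow> snd p"
  proof (rule tendsto_sandwich[where f="\<lambda>k. snd p - T / real (Suc k)" and h="\<lambda>k. snd p"])
    show "\<forall>\<^sub>F k in sequentially. snd p - T / real (Suc k) \<le> ?q k (snd p)"
      using approx_pt(2)[OF T t] by simp
    show "\<forall>\<^sub>F k in sequentially. ?q k (snd p) \<le> snd p"
      using approx_pt(3)[OF T t] by simp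
    show "(\<lambda>k. snd p - T / real (Suc k)) \<longlonglongrightarrow> snd p"
      using tendsto_diff[OF tendsto_const lim0] by simp
  qed simp
  then show "(\<lambda>k. fst p (?q k (snd p))) \<longlonglongrightarrow> fst p (snd p)"
    using approx_pt(1)[OF T t] t by (intro continuous_on_tendsto_compose[OF c]) auto
qed




lemma U1_point: "AE x in uniform_measure (restrict_space lborel {0..T}) {0..(T::real)}. x \<noteq> c"
proof (rule AE_I')
  let ?U1 = "uniform_measure (restrict_space lborel {0..T}) {0..(T::real)}"
  show "{x \<in> space ?U1. \<not> x \<noteq> c} \<subseteq> {c} \<inter> {0..T}"
    unfolding U1_space apply (intro subsetI) apply (simp only: mem_Collect_eq Int_iff singleton_iff)
    apply simp done
  have s: "{c} \<inter> {0..T} \<in> sets (restrict_space lborel {0..T})"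
    by (subst sets_restrict_space_iff) auto
  have "emeasure (restrict_space lborel {0..T}) ({c} \<inter> {0..T}) = 0"
    by (subst emeasure_restrict_space) (auto intro!: emeasure_lborel_countable)
  then have "emeasure ?U1 ({c} \<inter> {0..T}) = 0"
    using s by (subst emeasure_uniform_measure) (auto simp: Int_absorb1 sets_restrict_space)
  then show "{c} \<inter> {0..T} \<in> null_sets ?U1" using s by (auto intro: null_setsI)
qed

lemma U1_id_meas: "(\<lambda>x. x) \<in> borel_measurable (uniform_measure (restrict_space lborel {0..T}) {0..(T::real)})"
  using measurable_restrict_space1[OF measurable_ident, of borel "{0..T}"]
  by (subst measurable_cong_sets[OF U1_sets refl]) (simp add: id_def)

lemma PiU1_comp: "i \<in> I \<Longrightarrow> (\<lambda>u. u i) \<in> borel_measurable (Pi\<^sub>M I (\<lambda>_. uniform_measure (restrict_space lborel {0..T}) {0..(T::real)}))"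
proof -
  assume "i \<in> I"
  then have "(\<lambda>u. u i) \<in> Pi\<^sub>M I (\<lambda>_. uniform_measure (restrict_space lborel {0..T}) {0..(T::real)}) \<rightarrow>\<^sub>M uniform_measure (restrict_space lborel {0..T}) {0..(T::real)}"
    by (rule measurable_component_singleton)
  from measurable_compose[OF this U1_id_meas] show ?thesis by simp
qed

lemma U_comp[measurable]: "(\<lambda>u. u i) \<in> borel_measurable (unif_seq T)"
  unfolding unif_seq_def by (rule PiU1_comp) simp

lemma U_comp': "(\<lambda>u. u i) \<in> unif_seq T \<rightarrow>\<^sub>M restrict_space borel {0..T}"
  using measurable_component_singleton[of i UNIV "\<lambda>_. uniform_measure (restrict_space lborel {0..T}) {0..T}"]
  unfolding unif_seq_def by (simp add: measurable_cong_sets[OF refl U1_sets])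



lemma U_ties:
  assumes T: "0 < T" and ij: "i \<noteq> j"
  shows "AE u in unif_seq T. u i \<noteq> u j"
proof -
  let ?U1 = "uniform_measure (restrict_space lborel {0..T}) {0..(T::real)}"
  let ?M' = "Pi\<^sub>M (UNIV - {i}) (\<lambda>_. ?U1)"
  have p1: "prob_space ?U1" using U1_prob[OF T] .
  have ins: "insert i (UNIV - {i}) = UNIV" by auto
  have eq: "distr (?U1 \<Otimes>\<^sub>M ?M') (unif_seq T) (\<lambda>(x, X). X(i := x)) = unif_seq T"
    using distr_pair_PiM_eq_PiM[of "UNIV - {i}" "\<lambda>_. ?U1" i] p1
    unfolding unif_seq_def ins by simp
  interpret M': prob_space ?M' using p1 by (intro prob_space_PiM)
  interpret U1: prob_space ?U1 using p1 .
  interpret pair_sigma_finite ?U1 ?M' by unfold_locales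
  have mF: "(\<lambda>(x, X). X(i := x)) \<in> measurable (?U1 \<Otimes>\<^sub>M ?M') (unif_seq T)"
  proof -
    have "(\<lambda>z. (snd z)(i := fst z)) \<in> measurable (?U1 \<Otimes>\<^sub>M ?M') (unif_seq T)"
      unfolding unif_seq_def by (rule measurable_fun_upd[where J="UNIV - {i}"]) auto
    then show ?thesis by (simp add: split_beta')
  qed
  have ms: "{u \<in> space (unif_seq T). u i \<noteq> u j} \<in> sets (unif_seq T)"
  proof -
    have "(\<lambda>u. u i) \<in> borel_measurable (unif_seq T)" "(\<lambda>u. u j) \<in> borel_measurable (unif_seq T)"
      by (rule U_comp)+
    then have "{u \<in> space (unif_seq T). u i = u j} \<in> sets (unif_seq T)" by (rule measurable_equality_set)
    then have "space (unif_seq T) - {u \<in> space (unif_seq T). u i = u j} \<in> sets (unif_seq T)" by (rule sets.compl_sets)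
    moreover have "space (unif_seq T) - {u \<in> space (unif_seq T). u i = u j} = {u \<in> space (unif_seq T). u i \<noteq> u j}"
      by blast
    ultimately show ?thesis by simp
  qed
  have "AE z in ?U1 \<Otimes>\<^sub>M ?M'. fst z \<noteq> snd z j"
  proof (rule AE_pair_measure)
    have "(\<lambda>z. snd z j) \<in> borel_measurable (?U1 \<Otimes>\<^sub>M ?M')"
      using ij by (intro measurable_compose[OF measurable_snd PiU1_comp]) auto
    moreover have "(\<lambda>z. fst z) \<in> borel_measurable (?U1 \<Otimes>\<^sub>M ?M')"
      by (intro measurable_compose[OF measurable_fst U1_id_meas])
    ultimately have "{z \<in> space (?U1 \<Otimes>\<^sub>M ?M'). snd z j = fst z} \<in> sets (?U1 \<Otimes>\<^sub>M ?M')" by (rule measurable_equality_set)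
    then have "space (?U1 \<Otimes>\<^sub>M ?M') - {z \<in> space (?U1 \<Otimes>\<^sub>M ?M'). snd z j = fst z} \<in> sets (?U1 \<Otimes>\<^sub>M ?M')" by (rule sets.compl_sets)
    moreover have "space (?U1 \<Otimes>\<^sub>M ?M') - {z \<in> space (?U1 \<Otimes>\<^sub>M ?M'). snd z j = fst z}
       = {z \<in> space (?U1 \<Otimes>\<^sub>M ?M'). fst z \<noteq> snd z j}"
      by (rule set_eqI) (metis (mono_tags, lifting) Diff_iff mem_Collect_eq)
    ultimately show "{z \<in> space (?U1 \<Otimes>\<^sub>M ?M'). fst z \<noteq> snd z j} \<in> sets (?U1 \<Otimes>\<^sub>M ?M')" by simp
    show "AE x in ?U1. AE y in ?M'. fst (x, y) \<noteq> snd (x, y) j"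
    proof (rule AE_I2)
      fix x
      have "AE y in ?U1. x \<noteq> y" using U1_point[where T=T and c=x] by eventually_elim auto
      then show "AE y in ?M'. fst (x, y) \<noteq> snd (x, y) j"
        using AE_PiM_component[of "UNIV - {i}" "\<lambda>_. ?U1" j "\<lambda>y. x \<noteq> y"] p1 ij
        by simp
    qed
  qed
  then have "AE z in ?U1 \<Otimes>\<^sub>M ?M'. (case z of (x, X) \<Rightarrow> X(i := x)) i \<noteq> (case z of (x, X) \<Rightarrow> X(i := x)) j"
    by eventually_elim (auto simp: ij ij[symmetric] split: prod.splits)
  then have "AE u in distr (?U1 \<Otimes>\<^sub>M ?M') (unif_seq T) (\<lambda>(x, X). X(i := x)). u i \<noteq> u j"
    by (subst AE_distr_iff[OF mF ms])
  then show ?thesis unfolding eq .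
qed



lemma U_inj:
  assumes T: "0 < T"
  shows "AE u in unif_seq T. card (enum_pts (n, u)) = n"
proof -
  have "AE u in unif_seq T. \<forall>p\<in>{..<n}\<times>{..<n}. fst p \<noteq> snd p \<longrightarrow> u (fst p) \<noteq> u (snd p)"
    by (subst AE_finite_all) (auto intro: U_ties[OF T])
  then show ?thesis
  proof (rule AE_mp, intro AE_I2 impI)
    fix u :: "nat \<Rightarrow> real" assume "\<forall>p\<in>{..<n}\<times>{..<n}. fst p \<noteq> snd p \<longrightarrow> u (fst p) \<noteq> u (snd p)"
    then have "inj_on u {..<n}" unfolding inj_on_def by fastforce
    then show "card (enum_pts (n, u)) = n" by (simp add: enum_pts_def card_image)
  qed
qed




lemma enum_meas_pmf: "enum_pts \<in> measurable (measure_pmf p \<Otimes>\<^sub>M unif_seq T) (psi_space T)"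
  using enum_meas by (subst measurable_cong_sets[OF sets_pair_measure_cong[OF sets_measure_pmf_count_space refl] refl])

lemma pp_integral:
  assumes T: "0 < T" and r: "0 < r" and H: "H \<in> borel_measurable (psi_space T)"
  shows "(\<integral>\<^sup>+\<psi>. H \<psi> \<partial>poisson_pp T r) =
     (\<Sum>n. ennreal (pmf (poisson_pmf (r * T)) n) * (\<integral>\<^sup>+u. H (enum_pts (n, u)) \<partial>unif_seq T))"
proof -
  let ?p = "measure_pmf (poisson_pmf (r * T))"
  interpret U: prob_space "unif_seq T" using U_prob[OF T] .
  interpret pair_sigma_finite ?p "unif_seq T" by unfold_locales
  have Hm: "(\<lambda>x. H (enum_pts x)) \<in> borel_measurable (?p \<Otimes>\<^sub>M unif_seq T)"
    by (rule measurable_compose[OF enum_meas_pmf H])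
  have "(\<integral>\<^sup>+\<psi>. H \<psi> \<partial>poisson_pp T r) = (\<integral>\<^sup>+x. H (enum_pts x) \<partial>(?p \<Otimes>\<^sub>M unif_seq T))"
    unfolding poisson_pp_def using H by (intro nn_integral_distr[OF enum_meas_pmf]) simp
  also have "\<dots> = (\<integral>\<^sup>+n. (\<integral>\<^sup>+u. H (enum_pts (n, u)) \<partial>unif_seq T) \<partial>?p)"
    by (rule U.nn_integral_fst[symmetric, OF Hm])
  also have "\<dots> = (\<Sum>n. ennreal (pmf (poisson_pmf (r * T)) n) * (\<integral>\<^sup>+u. H (enum_pts (n, u)) \<partial>unif_seq T))"
    by (simp add: nn_integral_measure_pmf nn_integral_count_space_nat)
  finally show ?thesis .
qed




lemma prod_image_first:
  fixes n :: nat and u :: "nat \<Rightarrow> 'a" and h :: "'a \<Rightarrow> 'b::comm_monoid_mult"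
  shows "(\<Prod>g\<in>u ` {..<n}. h g) = (\<Prod>i<n. if \<exists>j\<in>{..<i}. u j = u i then 1 else h (u i))"
proof (induction n)
  case 0 then show ?case by simp
next
  case (Suc n)
  have im: "u ` {..<Suc n} = insert (u n) (u ` {..<n})" by (auto simp: lessThan_Suc)
  show ?case
  proof (cases "\<exists>j\<in>{..<n}. u j = u n")
    case True
    then have "u n \<in> u ` {..<n}" by (metis imageI)
    then have "insert (u n) (u ` {..<n}) = u ` {..<n}" by blast
    then show ?thesis using True Suc.IH by (simp add: im)
  next
    case False
    then have "u n \<notin> u ` {..<n}" by (metis imageE)
    then show ?thesis using False Suc.IH by (simp add: im mult.commute)
  qed
qed

lemma prod_image_meas:
  fixes c :: "'m \<Rightarrow> nat \<Rightarrow> real" and b :: "'m \<Rightarrow> real \<Rightarrow> real"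
  assumes c[measurable]: "\<And>i. (\<lambda>x. c x i) \<in> borel_measurable M"
    and b[measurable]: "\<And>i. (\<lambda>x. b x (c x i)) \<in> borel_measurable M"
  shows "(\<lambda>x. \<Prod>g\<in>(c x) ` {..<n}. b x g) \<in> borel_measurable M"
proof -
  have "(\<lambda>x. \<Prod>i<n. if \<exists>j\<in>{..<i}. c x j = c x i then 1 else b x (c x i)) \<in> borel_measurable M"
    by measurable
  then show ?thesis by (subst prod_image_first)
qed




locale core =
  fixes T :: real and Zh :: "(real \<Rightarrow> real) measure" and lY :: "(real \<Rightarrow> real) \<Rightarrow> real"
    and Mf mf :: "(real \<Rightarrow> real) \<Rightarrow> real" and \<phi> :: "real \<Rightarrow> real"
  assumes T_pos: "0 < T"
    and Zh_sets: "sets Zh = sets (path_space T)"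
    and Zh_space: "space Zh = space (path_space T)"
    and Zh_prob: "prob_space Zh"
    and phi_meas[measurable]: "\<phi> \<in> borel_measurable borel"
    and lY_meas[measurable]: "lY \<in> borel_measurable Zh"
    and lY_nonneg: "\<And>X. 0 \<le> lY X"
    and lY_fin: "(\<integral>\<^sup>+X. ennreal (lY X) \<partial>Zh) < \<infinity>"
    and Mf_meas[measurable]: "Mf \<in> borel_measurable Zh"
    and mf_meas[measurable]: "mf \<in> borel_measurable Zh"
    and bounds: "\<And>X t. X \<in> space Zh \<Longrightarrow> t \<in> {0..T} \<Longrightarrow>
        0 \<le> mf X \<and> mf X \<le> \<phi> (X t) \<and> \<phi> (X t) \<le> Mf X"
    and Dpos: "\<And>X. X \<in> space Zh \<Longrightarrow> 0 < Mf X - mf X"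
begin

abbreviation "U \<equiv> unif_seq T"
abbreviation "Psi \<equiv> psi_space T"
abbreviation "en \<equiv> enum_pts"

sublocale Z: prob_space Zh by (rule Zh_prob)
sublocale UU: prob_space U by (rule U_prob[OF T_pos])
sublocale ZU: pair_sigma_finite Zh U by unfold_locales

lemma fstZU[measurable]: "fst \<in> Zh \<Otimes>\<^sub>M U \<rightarrow>\<^sub>M Zh" by simp

lemma eval_ZU[measurable]: "(\<lambda>z. fst z (snd z i)) \<in> borel_measurable (Zh \<Otimes>\<^sub>M U)"
proof -
  have "(\<lambda>z. (fst z, snd z i)) \<in> Zh \<Otimes>\<^sub>M U \<rightarrow>\<^sub>M path_space T \<Otimes>\<^sub>M restrict_space borel {0..T}"
  proof (rule measurable_Pair)
    show "fst \<in> Zh \<Otimes>\<^sub>M U \<rightarrow>\<^sub>M path_space T"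
      using measurable_fst[of Zh U] by (simp add: measurable_cong_sets[OF refl Zh_sets])
    show "(\<lambda>z. snd z i) \<in> Zh \<Otimes>\<^sub>M U \<rightarrow>\<^sub>M restrict_space borel {0..T}"
      by (rule measurable_compose[OF measurable_snd U_comp'])
  qed
  from measurable_compose[OF this eval_meas[OF T_pos]] show ?thesis by simp
qed

lemma a_ZU[measurable]: "(\<lambda>z. Mf (fst z) - \<phi> (fst z (snd z i))) \<in> borel_measurable (Zh \<Otimes>\<^sub>M U)"
  by measurable

lemma prod_ZU: "(\<lambda>z. \<Prod>g\<in>en (n, snd z). Mf (fst z) - \<phi> (fst z g)) \<in> borel_measurable (Zh \<Otimes>\<^sub>M U)"
  unfolding enum_pts_def snd_conv fst_conv
  by (rule prod_image_meas[where c="\<lambda>z. snd z" and b="\<lambda>z g. Mf (fst z) - \<phi> (fst z g)"]) measurable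

lemma prodD_ZU: "(\<lambda>z. \<Prod>g\<in>en (n, snd z). (Mf (fst z) - \<phi> (fst z g)) / (Mf (fst z) - mf (fst z))) \<in> borel_measurable (Zh \<Otimes>\<^sub>M U)"
  unfolding enum_pts_def snd_conv fst_conv
  by (rule prod_image_meas[where c="\<lambda>z. snd z" and b="\<lambda>z g. (Mf (fst z) - \<phi> (fst z g)) / (Mf (fst z) - mf (fst z))"]) measurable

lemma pairen_ZU: "(\<lambda>z. (fst z, en (n, snd z))) \<in> Zh \<Otimes>\<^sub>M U \<rightarrow>\<^sub>M Zh \<Otimes>\<^sub>M Psi"
proof (rule measurable_Pair)
  show "fst \<in> Zh \<Otimes>\<^sub>M U \<rightarrow>\<^sub>M Zh" by simp
  have "(\<lambda>z. (n, snd z)) \<in> Zh \<Otimes>\<^sub>M U \<rightarrow>\<^sub>M count_space UNIV \<Otimes>\<^sub>M U" by simp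
  from measurable_compose[OF this enum_meas] show "(\<lambda>z. en (n, snd z)) \<in> Zh \<Otimes>\<^sub>M U \<rightarrow>\<^sub>M Psi" .
qed


lemma a_bounds:
  assumes X: "X \<in> space Zh" and g: "g \<in> {0..T}"
  shows "0 \<le> Mf X - \<phi> (X g)" "Mf X - \<phi> (X g) \<le> Mf X - mf X" "0 \<le> mf X"
  using bounds[OF X g] by auto

lemma fp_nonneg:
  assumes X: "X \<in> space Zh" and psi: "\<psi> \<subseteq> {0..T}"
  shows "0 \<le> exp (- Mf X * T) * (\<Prod>g\<in>\<psi>. Mf X - \<phi> (X g))"
  using a_bounds(1)[OF X] psi by (intro mult_nonneg_nonneg prod_nonneg) auto

lemma ff_nonneg:
  assumes X: "X \<in> space Zh" and psi: "\<psi> \<subseteq> {0..T}"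
  shows "0 \<le> lY X * exp (- Mf X * T) * (\<Prod>g\<in>\<psi>. Mf X - \<phi> (X g))"
  using fp_nonneg[OF X psi] lY_nonneg[of X] by (simp add: mult.assoc)

lemma dens_bounds:
  assumes X: "X \<in> space Zh" and psi: "\<psi> \<subseteq> {0..T}"
  shows "0 \<le> exp (- mf X * T) * (\<Prod>g\<in>\<psi>. (Mf X - \<phi> (X g)) / (Mf X - mf X))"
    "exp (- mf X * T) * (\<Prod>g\<in>\<psi>. (Mf X - \<phi> (X g)) / (Mf X - mf X)) \<le> 1"
proof -
  have D: "0 < Mf X - mf X" using Dpos[OF X] .
  have q: "0 \<le> (Mf X - \<phi> (X g)) / (Mf X - mf X) \<and> (Mf X - \<phi> (X g)) / (Mf X - mf X) \<le> 1" if "g \<in> \<psi>" for g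
    using a_bounds[OF X, of g] that psi D by auto
  have p0: "0 \<le> (\<Prod>g\<in>\<psi>. (Mf X - \<phi> (X g)) / (Mf X - mf X))" using q by (intro prod_nonneg) auto
  have p1: "(\<Prod>g\<in>\<psi>. (Mf X - \<phi> (X g)) / (Mf X - mf X)) \<le> 1" using q by (intro prod_le_1) auto
  have e1: "exp (- mf X * T) \<le> 1" using bounds[OF X, of 0] T_pos by auto
  show "0 \<le> exp (- mf X * T) * (\<Prod>g\<in>\<psi>. (Mf X - \<phi> (X g)) / (Mf X - mf X))" using p0 by simp
  show "exp (- mf X * T) * (\<Prod>g\<in>\<psi>. (Mf X - \<phi> (X g)) / (Mf X - mf X)) \<le> 1"
    using mult_mono[OF e1 p1] p0 by simp
qed

lemma weight_identity:
  assumes X: "X \<in> space Zh" and fin: "finite \<psi>" and card: "card \<psi> = n"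
  shows "pmf (poisson_pmf ((Mf X - mf X) * T)) n * (exp (- mf X * T) * (\<Prod>g\<in>\<psi>. (Mf X - \<phi> (X g)) / (Mf X - mf X)))
       = T ^ n / fact n * (exp (- Mf X * T) * (\<Prod>g\<in>\<psi>. Mf X - \<phi> (X g)))"
proof -
  define D where "D = Mf X - mf X"
  have D: "0 < D" using Dpos[OF X] by (simp add: D_def)
  have pm: "pmf (poisson_pmf (D * T)) n = (D * T) ^ n / fact n * exp (- (D * T))"
    using D T_pos by (intro pmf_poisson) simp
  have pr: "(\<Prod>g\<in>\<psi>. (Mf X - \<phi> (X g)) / D) = (\<Prod>g\<in>\<psi>. Mf X - \<phi> (X g)) / D ^ n"
    by (simp add: prod_dividef card)
  have ex: "exp (- (D * T)) * exp (- mf X * T) = exp (- Mf X * T)"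
    by (simp add: D_def exp_add[symmetric] algebra_simps)
  have "pmf (poisson_pmf (D * T)) n * (exp (- mf X * T) * (\<Prod>g\<in>\<psi>. (Mf X - \<phi> (X g)) / D))
      = (D ^ n / D ^ n) * (T ^ n / fact n) * (exp (- (D * T)) * exp (- mf X * T)) * (\<Prod>g\<in>\<psi>. Mf X - \<phi> (X g))"
    unfolding pm pr by (simp add: power_mult_distrib field_simps)
  also have "\<dots> = T ^ n / fact n * (exp (- Mf X * T) * (\<Prod>g\<in>\<psi>. Mf X - \<phi> (X g)))"
    using D ex by simp
  finally show ?thesis by (simp add: D_def)
qed

end


context core begin

abbreviation "N X \<equiv> distr (density (poisson_pp T (Mf X - mf X)) (\<lambda>\<psi>. ennreal (exp (- mf X * T) * (\<Prod>g\<in>\<psi>. (Mf X - \<phi> (X g)) / (Mf X - mf X)))))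
                    (Zh \<Otimes>\<^sub>M Psi) (\<lambda>\<psi>. (X, \<psi>))"

lemma dens_meas:
  assumes X: "X \<in> space Zh"
  shows "(\<lambda>\<psi>. ennreal (exp (- mf X * T) * (\<Prod>g\<in>\<psi>. (Mf X - \<phi> (X g)) / (Mf X - mf X)))) \<in> borel_measurable Psi"
proof (rule final_meas')
  fix n
  have "(\<lambda>u. \<Prod>g\<in>en (n, u). (Mf X - \<phi> (X g)) / (Mf X - mf X)) \<in> borel_measurable U"
    using measurable_Pair2[OF prodD_ZU X] by simp
  then show "(\<lambda>u. ennreal (exp (- mf X * T) * (\<Prod>g\<in>en (n, u). (Mf X - \<phi> (X g)) / (Mf X - mf X)))) \<in> borel_measurable U"
    by measurable
qed

lemma fp_U_meas:
  assumes X: "X \<in> space Zh"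
  shows "(\<lambda>u. ennreal (exp (- Mf X * T) * (\<Prod>g\<in>en (n, u). Mf X - \<phi> (X g)))) \<in> borel_measurable U"
proof -
  have "(\<lambda>u. \<Prod>g\<in>en (n, u). Mf X - \<phi> (X g)) \<in> borel_measurable U"
    using measurable_Pair2[OF prod_ZU X] by simp
  then show ?thesis by measurable
qed

lemma en_meas: "(\<lambda>u. en (n, u)) \<in> U \<rightarrow>\<^sub>M Psi"
proof -
  have "(\<lambda>u. (n, u)) \<in> U \<rightarrow>\<^sub>M count_space UNIV \<Otimes>\<^sub>M U" by simp
  from measurable_compose[OF this enum_meas] show ?thesis .
qed

lemma pp_sets: "sets (poisson_pp T r) = sets Psi"
  by (simp add: poisson_pp_def)

lemma K:
  assumes X: "X \<in> space Zh" and F[measurable]: "F \<in> borel_measurable (Zh \<Otimes>\<^sub>M Psi)"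
  shows "(\<integral>\<^sup>+z. F z \<partial>N X) = (\<Sum>n. ennreal (T ^ n / fact n) *
           (\<integral>\<^sup>+u. F (X, en (n, u)) * ennreal (exp (- Mf X * T) * (\<Prod>g\<in>en (n, u). Mf X - \<phi> (X g))) \<partial>U))"
proof -
  define D where "D = Mf X - mf X"
  have D: "0 < D" using Dpos[OF X] by (simp add: D_def)
  let ?d = "\<lambda>\<psi>. ennreal (exp (- mf X * T) * (\<Prod>g\<in>\<psi>. (Mf X - \<phi> (X g)) / (Mf X - mf X)))"
  let ?fp = "\<lambda>\<psi>. ennreal (exp (- Mf X * T) * (\<Prod>g\<in>\<psi>. Mf X - \<phi> (X g)))"
  let ?Q = "poisson_pp T (Mf X - mf X)"
  have dm: "?d \<in> borel_measurable Psi" by (rule dens_meas[OF X])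
  have FX: "(\<lambda>\<psi>. F (X, \<psi>)) \<in> borel_measurable Psi"
    using measurable_Pair2[OF F X] .
  have pm: "(\<lambda>\<psi>. (X, \<psi>)) \<in> density ?Q ?d \<rightarrow>\<^sub>M Zh \<Otimes>\<^sub>M Psi"
  proof (rule measurable_Pair)
    show "(\<lambda>\<psi>. X) \<in> density ?Q ?d \<rightarrow>\<^sub>M Zh" using X by (rule measurable_const)
    show "(\<lambda>\<psi>. \<psi>) \<in> density ?Q ?d \<rightarrow>\<^sub>M Psi" by (rule measurable_ident_sets) (simp only: sets_density pp_sets)
  qed
  have "(\<integral>\<^sup>+z. F z \<partial>N X) = (\<integral>\<^sup>+\<psi>. F (X, \<psi>) \<partial>density ?Q ?d)"
    using F by (intro nn_integral_distr[OF pm]) (simp only: measurable_distr_eq1)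
  also have "\<dots> = (\<integral>\<^sup>+\<psi>. ?d \<psi> * F (X, \<psi>) \<partial>?Q)"
  proof (rule nn_integral_density)
    show "?d \<in> borel_measurable ?Q" using dm by (subst measurable_cong_sets[OF pp_sets refl])
    show "(\<lambda>\<psi>. F (X, \<psi>)) \<in> borel_measurable ?Q" using FX by (subst measurable_cong_sets[OF pp_sets refl])
  qed
  also have "\<dots> = (\<Sum>n. ennreal (pmf (poisson_pmf ((Mf X - mf X) * T)) n) * (\<integral>\<^sup>+u. ?d (en (n, u)) * F (X, en (n, u)) \<partial>U))"
    by (rule pp_integral[OF T_pos Dpos[OF X] borel_measurable_times_ennreal[OF dm FX]])
  also have "\<dots> = (\<Sum>n. ennreal (T ^ n / fact n) * (\<integral>\<^sup>+u. F (X, en (n, u)) * ?fp (en (n, u)) \<partial>U))"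
  proof (rule suminf_cong)
    fix n
    have m1: "(\<lambda>u. ?d (en (n, u)) * F (X, en (n, u))) \<in> borel_measurable U"
      using measurable_compose[OF en_meas dm] measurable_compose[OF en_meas FX] by (rule borel_measurable_times_ennreal)
    have m2: "(\<lambda>u. F (X, en (n, u)) * ?fp (en (n, u))) \<in> borel_measurable U"
      using measurable_compose[OF en_meas FX] fp_U_meas[OF X, of n] by (rule borel_measurable_times_ennreal)
    have "ennreal (pmf (poisson_pmf ((Mf X - mf X) * T)) n) * (\<integral>\<^sup>+u. ?d (en (n, u)) * F (X, en (n, u)) \<partial>U)
        = (\<integral>\<^sup>+u. ennreal (pmf (poisson_pmf ((Mf X - mf X) * T)) n) * (?d (en (n, u)) * F (X, en (n, u))) \<partial>U)"
      by (rule nn_integral_cmult[symmetric, OF m1])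
    also have "\<dots> = (\<integral>\<^sup>+u. ennreal (T ^ n / fact n) * (F (X, en (n, u)) * ?fp (en (n, u))) \<partial>U)"
    proof (rule nn_integral_cong_AE)
      show "AE u in U. ennreal (pmf (poisson_pmf ((Mf X - mf X) * T)) n) * (?d (en (n, u)) * F (X, en (n, u)))
             = ennreal (T ^ n / fact n) * (F (X, en (n, u)) * ?fp (en (n, u)))"
        using U_inj[OF T_pos, of n] AE_space
      proof eventually_elim
        case (elim u)
        then have Om: "en (n, u) \<in> Om T" using enum_in_Om by blast
        then have fin: "finite (en (n, u))" and sub: "en (n, u) \<subseteq> {0..T}" by blast+
        define p where "p = pmf (poisson_pmf ((Mf X - mf X) * T)) n"
        define d where "d = exp (- mf X * T) * (\<Prod>g\<in>en (n, u). (Mf X - \<phi> (X g)) / (Mf X - mf X))"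
        define c where "c = T ^ n / fact n"
        define q where "q = exp (- Mf X * T) * (\<Prod>g\<in>en (n, u). Mf X - \<phi> (X g))"
        have id: "p * d = c * q"
          unfolding p_def d_def c_def q_def by (rule weight_identity[OF X fin elim(1)])
        have n0: "0 \<le> p" unfolding p_def by simp
        have n1: "0 \<le> d" unfolding d_def by (rule dens_bounds(1)[OF X sub])
        have n2: "0 \<le> q" unfolding q_def by (rule fp_nonneg[OF X sub])
        have n3: "0 \<le> c" unfolding c_def using T_pos by simp
        have "ennreal p * (ennreal d * F (X, en (n, u))) = ennreal (p * d) * F (X, en (n, u))"
          using n0 n1 by (simp add: ennreal_mult mult.assoc)
        also have "\<dots> = ennreal c * (F (X, en (n, u)) * ennreal q)"
          unfolding id using n2 n3 by (simp add: ennreal_mult mult.assoc mult.commute[of "ennreal q"])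
        finally show ?case unfolding p_def d_def c_def q_def .
      qed
    qed
    also have "\<dots> = ennreal (T ^ n / fact n) * (\<integral>\<^sup>+u. F (X, en (n, u)) * ?fp (en (n, u)) \<partial>U)"
      by (rule nn_integral_cmult[OF m2])
    finally show "ennreal (pmf (poisson_pmf ((Mf X - mf X) * T)) n) * (\<integral>\<^sup>+u. ?d (en (n, u)) * F (X, en (n, u)) \<partial>U)
        = ennreal (T ^ n / fact n) * (\<integral>\<^sup>+u. F (X, en (n, u)) * ?fp (en (n, u)) \<partial>U)" .
  qed
  finally show ?thesis .
qed

end


context core begin

lemma pp_prob: "prob_space (poisson_pp T r)"
proof -
  interpret pp: pair_prob_space "measure_pmf (poisson_pmf (r * T))" U by unfold_locales
  show ?thesis unfolding poisson_pp_def
    by (rule pp.P.prob_space_distr[OF enum_meas_pmf])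
qed

lemma fp_ZU: "(\<lambda>z. ennreal (exp (- Mf (fst z) * T) * (\<Prod>g\<in>en (n, snd z). Mf (fst z) - \<phi> (fst z g)))) \<in> borel_measurable (Zh \<Otimes>\<^sub>M U)"
  using prod_ZU[of n] by measurable

lemma KM:
  assumes F[measurable]: "F \<in> borel_measurable (Zh \<Otimes>\<^sub>M Psi)"
  shows "(\<lambda>X. \<integral>\<^sup>+z. F z \<partial>N X) \<in> borel_measurable Zh"
proof -
  have "(\<lambda>X. \<Sum>n. ennreal (T ^ n / fact n) *
           (\<integral>\<^sup>+u. F (X, en (n, u)) * ennreal (exp (- Mf X * T) * (\<Prod>g\<in>en (n, u). Mf X - \<phi> (X g))) \<partial>U))
        \<in> borel_measurable Zh"
  proof (rule borel_measurable_suminf_order, rule borel_measurable_times_ennreal)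
    fix n
    show "(\<lambda>X. ennreal (T ^ n / fact n)) \<in> borel_measurable Zh" by simp
    have "(\<lambda>z. F (fst z, en (n, snd z))) \<in> borel_measurable (Zh \<Otimes>\<^sub>M U)"
      by (rule measurable_compose[OF pairen_ZU F])
    then have "(\<lambda>z. F (fst z, en (n, snd z)) * ennreal (exp (- Mf (fst z) * T) * (\<Prod>g\<in>en (n, snd z). Mf (fst z) - \<phi> (fst z g))))
        \<in> borel_measurable (Zh \<Otimes>\<^sub>M U)"
      using fp_ZU[of n] by (rule borel_measurable_times_ennreal)
    then show "(\<lambda>X. \<integral>\<^sup>+u. F (X, en (n, u)) * ennreal (exp (- Mf X * T) * (\<Prod>g\<in>en (n, u). Mf X - \<phi> (X g))) \<partial>U)
        \<in> borel_measurable Zh"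
      by (intro UU.borel_measurable_nn_integral) (simp add: split_beta')
  qed
  then show ?thesis
    by (rule measurable_cong[THEN iffD2, rotated]) (rule K[OF _ F], assumption)
qed

lemma N_sub:
  assumes X: "X \<in> space Zh"
  shows "subprob_space (N X)"
proof -
  let ?d = "\<lambda>\<psi>. ennreal (exp (- mf X * T) * (\<Prod>g\<in>\<psi>. (Mf X - \<phi> (X g)) / (Mf X - mf X)))"
  let ?Q = "poisson_pp T (Mf X - mf X)"
  interpret Q: prob_space ?Q by (rule pp_prob)
  have dm: "?d \<in> borel_measurable ?Q" using dens_meas[OF X] by (subst measurable_cong_sets[OF pp_sets refl])
  have spQ: "space ?Q = Om T" by (simp add: poisson_pp_def psi_space_space)
  have "subprob_space (density ?Q ?d)"
  proof (rule subprob_spaceI)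
    have "emeasure (density ?Q ?d) (space (density ?Q ?d)) = (\<integral>\<^sup>+\<psi>. ?d \<psi> * indicator (space ?Q) \<psi> \<partial>?Q)"
      using emeasure_density[OF dm sets.top] by simp
    also have "\<dots> \<le> (\<integral>\<^sup>+\<psi>. indicator (space ?Q) \<psi> \<partial>?Q)"
    proof (rule nn_integral_mono)
      fix \<psi> assume "\<psi> \<in> space ?Q"
      then have "\<psi> \<subseteq> {0..T}" by (simp add: spQ)
      then show "?d \<psi> * indicator (space ?Q) \<psi> \<le> indicator (space ?Q) \<psi>"
        using dens_bounds(2)[OF X] by (auto simp: indicator_def)
    qed
    also have "\<dots> = 1" using Q.emeasure_space_1 by simp
    finally show "emeasure (density ?Q ?d) (space (density ?Q ?d)) \<le> 1" .
    show "space (density ?Q ?d) \<noteq> {}" using spQ by auto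
  qed
  then show ?thesis
  proof (rule subprob_space.subprob_space_distr)
    show "(\<lambda>\<psi>. (X, \<psi>)) \<in> density ?Q ?d \<rightarrow>\<^sub>M Zh \<Otimes>\<^sub>M Psi"
    proof (rule measurable_Pair)
      show "(\<lambda>\<psi>. X) \<in> density ?Q ?d \<rightarrow>\<^sub>M Zh" using X by (rule measurable_const)
      show "(\<lambda>\<psi>. \<psi>) \<in> density ?Q ?d \<rightarrow>\<^sub>M Psi" by (rule measurable_ident_sets) (simp only: sets_density pp_sets)
    qed
    show "space (Zh \<Otimes>\<^sub>M Psi) \<noteq> {}" using X by (auto simp: space_pair_measure psi_space_space)
  qed
qed

lemma N_meas: "N \<in> Zh \<rightarrow>\<^sub>M subprob_algebra (Zh \<Otimes>\<^sub>M Psi)"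
proof (rule measurable_subprob_algebra)
  fix X assume "X \<in> space Zh" then show "subprob_space (N X)" by (rule N_sub)
next
  fix X show "sets (N X) = sets (Zh \<Otimes>\<^sub>M Psi)" by simp
next
  fix A assume A: "A \<in> sets (Zh \<Otimes>\<^sub>M Psi)"
  have "(\<lambda>X. \<integral>\<^sup>+z. indicator A z \<partial>N X) \<in> borel_measurable Zh"
    using A by (intro KM) simp
  then show "(\<lambda>X. emeasure (N X) A) \<in> borel_measurable Zh"
    using A by simp
qed

end


context core begin

abbreviation "Zplus \<equiv> normalize_measure (density Zh (\<lambda>X. ennreal (lY X)))"
abbreviation "PP \<equiv> normalize_measure (Zplus \<bind> N)"

definition Phi :: "((real \<Rightarrow> real) \<times> real set \<Rightarrow> ennreal) \<Rightarrow> ennreal" where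
  "Phi F = (\<Sum>n. ennreal (T ^ n / fact n) * (\<integral>\<^sup>+X. \<integral>\<^sup>+u. F (X, en (n, u)) *
       ennreal (lY X * exp (- Mf X * T) * (\<Prod>g\<in>en (n, u). Mf X - \<phi> (X g))) \<partial>U \<partial>Zh))"

lemma ff_ZU: "(\<lambda>z. ennreal (lY (fst z) * exp (- Mf (fst z) * T) * (\<Prod>g\<in>en (n, snd z). Mf (fst z) - \<phi> (fst z g)))) \<in> borel_measurable (Zh \<Otimes>\<^sub>M U)"
  using prod_ZU[of n] by measurable

lemma Zplus_sets: "sets Zplus = sets Zh"
  by (simp add: normalize_measure_def)

lemma Zplus_space: "space Zplus = space Zh"
  by (simp add: normalize_measure_def space_scale_measure)

lemma bind_sets: "sets (Zplus \<bind> N) = sets (Zh \<Otimes>\<^sub>M Psi)"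
  using Zplus_space Z.not_empty by (intro sets_bind) auto

lemma PP_sets: "sets PP = sets (Zh \<Otimes>\<^sub>M Psi)"
  unfolding normalize_measure_def[of "Zplus \<bind> N"] sets_scale_measure by (rule bind_sets)

lemma N_meas': "N \<in> Zplus \<rightarrow>\<^sub>M subprob_algebra (Zh \<Otimes>\<^sub>M Psi)"
  using N_meas by (subst measurable_cong_sets[OF Zplus_sets refl])

lemma inner_meas:
  assumes F[measurable]: "F \<in> borel_measurable (Zh \<Otimes>\<^sub>M Psi)"
  shows "(\<lambda>X. \<integral>\<^sup>+u. F (X, en (n, u)) * ennreal (lY X * exp (- Mf X * T) * (\<Prod>g\<in>en (n, u). Mf X - \<phi> (X g))) \<partial>U)
     \<in> borel_measurable Zh"
proof -
  have "(\<lambda>z. F (fst z, en (n, snd z))) \<in> borel_measurable (Zh \<Otimes>\<^sub>M U)"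
    by (rule measurable_compose[OF pairen_ZU F])
  then have "(\<lambda>z. F (fst z, en (n, snd z)) * ennreal (lY (fst z) * exp (- Mf (fst z) * T) * (\<Prod>g\<in>en (n, snd z). Mf (fst z) - \<phi> (fst z g))))
      \<in> borel_measurable (Zh \<Otimes>\<^sub>M U)"
    using ff_ZU[of n] by (rule borel_measurable_times_ennreal)
  then show ?thesis
    by (intro UU.borel_measurable_nn_integral) (simp add: split_beta')
qed

lemma lY_K:
  assumes F[measurable]: "F \<in> borel_measurable (Zh \<Otimes>\<^sub>M Psi)"
  shows "(\<integral>\<^sup>+X. ennreal (lY X) * (\<integral>\<^sup>+z. F z \<partial>N X) \<partial>Zh) = Phi F"
proof -
  let ?I = "\<lambda>n X. \<integral>\<^sup>+u. F (X, en (n, u)) * ennreal (lY X * exp (- Mf X * T) * (\<Prod>g\<in>en (n, u). Mf X - \<phi> (X g))) \<partial>U"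
  have "(\<integral>\<^sup>+X. ennreal (lY X) * (\<integral>\<^sup>+z. F z \<partial>N X) \<partial>Zh) = (\<integral>\<^sup>+X. (\<Sum>n. ennreal (T ^ n / fact n) * ?I n X) \<partial>Zh)"
  proof (rule nn_integral_cong)
    fix X assume X: "X \<in> space Zh"
    have "ennreal (lY X) * (\<integral>\<^sup>+z. F z \<partial>N X) = ennreal (lY X) * (\<Sum>n. ennreal (T ^ n / fact n) *
           (\<integral>\<^sup>+u. F (X, en (n, u)) * ennreal (exp (- Mf X * T) * (\<Prod>g\<in>en (n, u). Mf X - \<phi> (X g))) \<partial>U))"
      by (simp only: K[OF X F])
    also have "\<dots> = (\<Sum>n. ennreal (T ^ n / fact n) * (ennreal (lY X) *
           (\<integral>\<^sup>+u. F (X, en (n, u)) * ennreal (exp (- Mf X * T) * (\<Prod>g\<in>en (n, u). Mf X - \<phi> (X g))) \<partial>U)))"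
      by (subst ennreal_suminf_cmult[symmetric]) (simp only: mult.left_commute)
    also have "\<dots> = (\<Sum>n. ennreal (T ^ n / fact n) * ?I n X)"
    proof (rule suminf_cong)
      fix n
      have m: "(\<lambda>u. F (X, en (n, u)) * ennreal (exp (- Mf X * T) * (\<Prod>g\<in>en (n, u). Mf X - \<phi> (X g)))) \<in> borel_measurable U"
        using measurable_compose[OF en_meas measurable_Pair2[OF F X]] fp_U_meas[OF X, of n]
        by (rule borel_measurable_times_ennreal)
      have "ennreal (lY X) * (\<integral>\<^sup>+u. F (X, en (n, u)) * ennreal (exp (- Mf X * T) * (\<Prod>g\<in>en (n, u). Mf X - \<phi> (X g))) \<partial>U)
          = (\<integral>\<^sup>+u. ennreal (lY X) * (F (X, en (n, u)) * ennreal (exp (- Mf X * T) * (\<Prod>g\<in>en (n, u). Mf X - \<phi> (X g)))) \<partial>U)"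
        by (rule nn_integral_cmult[symmetric, OF m])
      also have "\<dots> = ?I n X"
      proof (rule nn_integral_cong)
        fix u assume u: "u \<in> space U"
        have sub: "en (n, u) \<subseteq> {0..T}" using enum_in_Om[OF u] by blast
        have e: "ennreal (lY X) * ennreal (exp (- Mf X * T) * (\<Prod>g\<in>en (n, u). Mf X - \<phi> (X g)))
            = ennreal (lY X * exp (- Mf X * T) * (\<Prod>g\<in>en (n, u). Mf X - \<phi> (X g)))"
          using lY_nonneg[of X] fp_nonneg[OF X sub] by (simp add: ennreal_mult mult.assoc)
        then show "ennreal (lY X) * (F (X, en (n, u)) * ennreal (exp (- Mf X * T) * (\<Prod>g\<in>en (n, u). Mf X - \<phi> (X g))))
            = F (X, en (n, u)) * ennreal (lY X * exp (- Mf X * T) * (\<Prod>g\<in>en (n, u). Mf X - \<phi> (X g)))"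
          by (subst mult.left_commute) (simp only: e)
      qed
      finally have eq: "ennreal (lY X) * (\<integral>\<^sup>+u. F (X, en (n, u)) * ennreal (exp (- Mf X * T) * (\<Prod>g\<in>en (n, u). Mf X - \<phi> (X g))) \<partial>U) = ?I n X" .
      show "ennreal (T ^ n / fact n) * (ennreal (lY X) * (\<integral>\<^sup>+u. F (X, en (n, u)) * ennreal (exp (- Mf X * T) * (\<Prod>g\<in>en (n, u). Mf X - \<phi> (X g))) \<partial>U))
          = ennreal (T ^ n / fact n) * ?I n X" by (simp only: eq)
    qed
    finally show "ennreal (lY X) * (\<integral>\<^sup>+z. F z \<partial>N X) = (\<Sum>n. ennreal (T ^ n / fact n) * ?I n X)" .
  qed
  also have "\<dots> = (\<Sum>n. \<integral>\<^sup>+X. ennreal (T ^ n / fact n) * ?I n X \<partial>Zh)"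
    by (rule nn_integral_suminf) (rule borel_measurable_times_ennreal[OF borel_measurable_const inner_meas[OF F]])
  also have "\<dots> = Phi F"
    unfolding Phi_def by (rule suminf_cong, rule nn_integral_cmult[OF inner_meas[OF F]])
  finally show ?thesis .
qed

lemma PP_int:
  assumes F[measurable]: "F \<in> borel_measurable (Zh \<Otimes>\<^sub>M Psi)"
  shows "(\<integral>\<^sup>+z. F z \<partial>PP) = (1 / emeasure (Zplus \<bind> N) (space (Zplus \<bind> N))) *
     ((1 / emeasure (density Zh (\<lambda>X. ennreal (lY X))) (space (density Zh (\<lambda>X. ennreal (lY X))))) * Phi F)"
proof -
  have Fb: "F \<in> borel_measurable (Zplus \<bind> N)" using F measurable_cong_sets[OF bind_sets refl] by blast
  have KMz: "(\<lambda>X. \<integral>\<^sup>+z. F z \<partial>N X) \<in> borel_measurable (density Zh (\<lambda>X. ennreal (lY X)))"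
    using KM[OF F] measurable_cong_sets[OF sets_density refl] by blast
  have "(\<integral>\<^sup>+z. F z \<partial>PP) = (1 / emeasure (Zplus \<bind> N) (space (Zplus \<bind> N))) * (\<integral>\<^sup>+z. F z \<partial>(Zplus \<bind> N))"
    unfolding normalize_measure_def[of "Zplus \<bind> N"] by (rule nn_integral_scale_measure[OF Fb])
  also have "(\<integral>\<^sup>+z. F z \<partial>(Zplus \<bind> N)) = (\<integral>\<^sup>+X. (\<integral>\<^sup>+z. F z \<partial>N X) \<partial>Zplus)"
    by (rule nn_integral_bind[OF F N_meas'])
  also have "\<dots> = (1 / emeasure (density Zh (\<lambda>X. ennreal (lY X))) (space (density Zh (\<lambda>X. ennreal (lY X))))) *
        (\<integral>\<^sup>+X. (\<integral>\<^sup>+z. F z \<partial>N X) \<partial>density Zh (\<lambda>X. ennreal (lY X)))"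
    unfolding normalize_measure_def by (rule nn_integral_scale_measure[OF KMz])
  also have "(\<integral>\<^sup>+X. (\<integral>\<^sup>+z. F z \<partial>N X) \<partial>density Zh (\<lambda>X. ennreal (lY X))) = (\<integral>\<^sup>+X. ennreal (lY X) * (\<integral>\<^sup>+z. F z \<partial>N X) \<partial>Zh)"
  proof (rule nn_integral_density[OF _ KM[OF F]])
    show "(\<lambda>X. ennreal (lY X)) \<in> borel_measurable Zh" by measurable
  qed
  also have "\<dots> = Phi F" by (rule lY_K[OF F])
  finally show ?thesis .
qed

end


context core begin

lemma hZU:
  assumes A[measurable]: "A \<in> borel_measurable Zh"
  shows "(\<lambda>z. A (fst z) * ennreal (lY (fst z) * exp (- Mf (fst z) * T) * (\<Prod>g\<in>en (n, snd z). Mf (fst z) - \<phi> (fst z g))))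
     \<in> borel_measurable (Zh \<Otimes>\<^sub>M U)"
  using ff_ZU[of n] by measurable

lemma Fh_meas:
  assumes A[measurable]: "A \<in> borel_measurable Zh"
  shows "(\<lambda>\<psi>. \<integral>\<^sup>+X. A X * ennreal (lY X * exp (- Mf X * T) * (\<Prod>g\<in>\<psi>. Mf X - \<phi> (X g))) \<partial>Zh) \<in> borel_measurable Psi"
proof (rule final_meas')
  fix n
  have "(\<lambda>(u, X). A X * ennreal (lY X * exp (- Mf X * T) * (\<Prod>g\<in>en (n, u). Mf X - \<phi> (X g)))) \<in> borel_measurable (U \<Otimes>\<^sub>M Zh)"
    using hZU[OF A, of n] by (subst measurable_pair_swap_iff) (simp add: split_beta')
  then show "(\<lambda>u. \<integral>\<^sup>+X. A X * ennreal (lY X * exp (- Mf X * T) * (\<Prod>g\<in>en (n, u). Mf X - \<phi> (X g))) \<partial>Zh) \<in> borel_measurable U"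
    by (intro Z.borel_measurable_nn_integral) simp
qed

lemma Phi_prod:
  assumes A[measurable]: "A \<in> borel_measurable Zh" and G[measurable]: "G \<in> borel_measurable Psi"
  shows "Phi (\<lambda>z. A (fst z) * G (snd z)) = (\<Sum>n. ennreal (T ^ n / fact n) *
     (\<integral>\<^sup>+u. G (en (n, u)) * (\<integral>\<^sup>+X. A X * ennreal (lY X * exp (- Mf X * T) * (\<Prod>g\<in>en (n, u). Mf X - \<phi> (X g))) \<partial>Zh) \<partial>U))"
  unfolding Phi_def
proof (rule suminf_cong, rule arg_cong[where f="\<lambda>x. ennreal (T ^ n / fact n) * x" for n])
  fix n
  let ?ff = "\<lambda>X u. ennreal (lY X * exp (- Mf X * T) * (\<Prod>g\<in>en (n, u). Mf X - \<phi> (X g)))"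
  have Gm: "(\<lambda>z. G (en (n, snd z))) \<in> borel_measurable (Zh \<Otimes>\<^sub>M U)"
    by (rule measurable_compose[OF measurable_snd measurable_compose[OF en_meas G]])
  have jm: "case_prod (\<lambda>X u. A X * G (en (n, u)) * ?ff X u) \<in> borel_measurable (Zh \<Otimes>\<^sub>M U)"
  proof -
    have "(\<lambda>z. G (en (n, snd z)) * (A (fst z) * ?ff (fst z) (snd z))) \<in> borel_measurable (Zh \<Otimes>\<^sub>M U)"
      using Gm hZU[OF A, of n] by (rule borel_measurable_times_ennreal)
    then show ?thesis by (simp add: split_beta' mult_ac)
  qed
  have "(\<integral>\<^sup>+X. \<integral>\<^sup>+u. A (fst (X, en (n, u))) * G (snd (X, en (n, u))) * ?ff X u \<partial>U \<partial>Zh)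
      = (\<integral>\<^sup>+X. \<integral>\<^sup>+u. A X * G (en (n, u)) * ?ff X u \<partial>U \<partial>Zh)" by simp
  also have "\<dots> = (\<integral>\<^sup>+u. \<integral>\<^sup>+X. A X * G (en (n, u)) * ?ff X u \<partial>Zh \<partial>U)"
    by (rule ZU.Fubini'[OF jm, symmetric])
  also have "\<dots> = (\<integral>\<^sup>+u. G (en (n, u)) * (\<integral>\<^sup>+X. A X * ?ff X u \<partial>Zh) \<partial>U)"
  proof (rule nn_integral_cong)
    fix u assume u: "u \<in> space U"
    have m: "(\<lambda>X. A X * ?ff X u) \<in> borel_measurable Zh"
      using measurable_Pair1[OF hZU[OF A, of n] u] by simp
    have "(\<integral>\<^sup>+X. A X * G (en (n, u)) * ?ff X u \<partial>Zh) = (\<integral>\<^sup>+X. G (en (n, u)) * (A X * ?ff X u) \<partial>Zh)"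
      by (simp only: mult_ac)
    also have "\<dots> = G (en (n, u)) * (\<integral>\<^sup>+X. A X * ?ff X u \<partial>Zh)"
      by (rule nn_integral_cmult[OF m])
    finally show "(\<integral>\<^sup>+X. A X * G (en (n, u)) * ?ff X u \<partial>Zh) = G (en (n, u)) * (\<integral>\<^sup>+X. A X * ?ff X u \<partial>Zh)" .
  qed
  finally show "(\<integral>\<^sup>+X. \<integral>\<^sup>+u. A (fst (X, en (n, u))) * G (snd (X, en (n, u))) * ?ff X u \<partial>U \<partial>Zh)
      = (\<integral>\<^sup>+u. G (en (n, u)) * (\<integral>\<^sup>+X. A X * ?ff X u \<partial>Zh) \<partial>U)" .
qed

lemma ff_bound:
  assumes X: "X \<in> space Zh" and psi: "\<psi> \<in> Om T"
  shows "lY X * exp (- Mf X * T) * (\<Prod>g\<in>\<psi>. Mf X - \<phi> (X g)) \<le> lY X * (fact (card \<psi>) / T ^ card \<psi>)"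
proof -
  let ?k = "card \<psi>"
  have M0: "0 \<le> Mf X" using bounds[OF X, of 0] T_pos by auto
  have ab: "0 \<le> Mf X - \<phi> (X g) \<and> Mf X - \<phi> (X g) \<le> Mf X" if "g \<in> \<psi>" for g
  proof -
    have "g \<in> {0..T}" using psi that by blast
    from bounds[OF X this] show ?thesis by linarith
  qed
  have "(\<Prod>g\<in>\<psi>. Mf X - \<phi> (X g)) \<le> (\<Prod>g\<in>\<psi>. Mf X)"
    using ab by (intro prod_mono) auto
  also have "\<dots> = Mf X ^ ?k" by simp
  finally have p: "(\<Prod>g\<in>\<psi>. Mf X - \<phi> (X g)) \<le> Mf X ^ ?k" .
  have "(Mf X * T) ^ ?k / fact ?k \<le> exp (Mf X * T)"
    using M0 T_pos by (intro exp_ge_term) simp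
  then have "Mf X ^ ?k * T ^ ?k \<le> fact ?k * exp (Mf X * T)"
    by (simp add: power_mult_distrib field_simps)
  then have e: "exp (- Mf X * T) * Mf X ^ ?k \<le> fact ?k / T ^ ?k"
    using T_pos by (simp add: field_simps exp_minus)
  have "exp (- Mf X * T) * (\<Prod>g\<in>\<psi>. Mf X - \<phi> (X g)) \<le> exp (- Mf X * T) * Mf X ^ ?k"
    using p by (intro mult_left_mono) auto
  also note e
  finally have "exp (- Mf X * T) * (\<Prod>g\<in>\<psi>. Mf X - \<phi> (X g)) \<le> fact ?k / T ^ ?k" .
  from mult_left_mono[OF this lY_nonneg[of X]] show ?thesis by (simp only: mult.assoc)
qed

lemma Fh_fin:
  assumes psi: "\<psi> \<in> Om T"
  shows "(\<integral>\<^sup>+X. ennreal (lY X * exp (- Mf X * T) * (\<Prod>g\<in>\<psi>. Mf X - \<phi> (X g))) \<partial>Zh) < \<infinity>"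
proof -
  let ?c = "fact (card \<psi>) / T ^ card \<psi> :: real"
  have c0: "0 \<le> ?c" using T_pos by simp
  have "(\<integral>\<^sup>+X. ennreal (lY X * exp (- Mf X * T) * (\<Prod>g\<in>\<psi>. Mf X - \<phi> (X g))) \<partial>Zh)
      \<le> (\<integral>\<^sup>+X. ennreal ?c * ennreal (lY X) \<partial>Zh)"
  proof (rule nn_integral_mono)
    fix X assume X: "X \<in> space Zh"
    show "ennreal (lY X * exp (- Mf X * T) * (\<Prod>g\<in>\<psi>. Mf X - \<phi> (X g))) \<le> ennreal ?c * ennreal (lY X)"
    proof -
      have "ennreal ?c * ennreal (lY X) = ennreal (lY X * ?c)"
        using c0 lY_nonneg[of X] by (simp add: ennreal_mult[symmetric] mult.commute)
      then show ?thesis using ennreal_leI[OF ff_bound[OF X psi]] by simp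
    qed
  qed
  also have "\<dots> = ennreal ?c * (\<integral>\<^sup>+X. ennreal (lY X) \<partial>Zh)"
    by (rule nn_integral_cmult) simp
  also have "\<dots> < \<infinity>" using lY_fin by (simp add: ennreal_mult_less_top)
  finally show ?thesis .
qed

end


context core begin

abbreviation "Fh \<psi> \<equiv> \<integral>\<^sup>+X. ennreal (lY X * exp (- Mf X * T) * (\<Prod>g\<in>\<psi>. Mf X - \<phi> (X g))) \<partial>Zh"
abbreviation "Ih Xs \<psi> \<equiv> \<integral>\<^sup>+X. indicator Xs X * ennreal (lY X * exp (- Mf X * T) * (\<Prod>g\<in>\<psi>. Mf X - \<phi> (X g))) \<partial>Zh"
abbreviation "Cst \<equiv> (1 / emeasure (Zplus \<bind> N) (space (Zplus \<bind> N))) *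
     (1 / emeasure (density Zh (\<lambda>X. ennreal (lY X))) (space (density Zh (\<lambda>X. ennreal (lY X)))))"

lemma Fh_meas1: "Fh \<in> borel_measurable Psi"
  using Fh_meas[of "\<lambda>_. 1"] by simp

lemma Ih_meas: "Xs \<in> sets Zh \<Longrightarrow> Ih Xs \<in> borel_measurable Psi"
  by (rule Fh_meas) simp

lemma snd_PP: "snd \<in> PP \<rightarrow>\<^sub>M Psi"
  using measurable_snd measurable_cong_sets[OF PP_sets refl] by blast

lemma Ppsi_int:
  assumes G[measurable]: "G \<in> borel_measurable Psi"
  shows "(\<integral>\<^sup>+\<psi>. G \<psi> \<partial>distr PP Psi snd) = Cst * (\<Sum>n. ennreal (T ^ n / fact n) * (\<integral>\<^sup>+u. G (en (n, u)) * Fh (en (n, u)) \<partial>U))"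
proof -
  have Gs: "(\<lambda>z. G (snd z)) \<in> borel_measurable (Zh \<Otimes>\<^sub>M Psi)" by measurable
  have "(\<integral>\<^sup>+\<psi>. G \<psi> \<partial>distr PP Psi snd) = (\<integral>\<^sup>+z. G (snd z) \<partial>PP)"
    using G by (intro nn_integral_distr[OF snd_PP]) (simp only: measurable_distr_eq1)
  also have "\<dots> = Cst * Phi (\<lambda>z. G (snd z))"
    by (simp only: PP_int[OF Gs] mult.assoc)
  also have "Phi (\<lambda>z. G (snd z)) = Phi (\<lambda>z. (\<lambda>_. 1) (fst z) * G (snd z))" by simp
  also have "\<dots> = (\<Sum>n. ennreal (T ^ n / fact n) * (\<integral>\<^sup>+u. G (en (n, u)) * Fh (en (n, u)) \<partial>U))"
    by (subst Phi_prod) simp_all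
  finally show ?thesis .
qed

lemma ratio_times:
  assumes psi: "\<psi> \<in> Om T"
  shows "indicator B \<psi> * (Ih Xs \<psi> / Fh \<psi>) * Fh \<psi> = indicator B \<psi> * Ih Xs \<psi>"
proof -
  have le: "Ih Xs \<psi> \<le> Fh \<psi>"
    by (intro nn_integral_mono) (auto simp: indicator_def)
  show ?thesis
  proof (cases "Fh \<psi> = 0")
    case True
    then have "Ih Xs \<psi> = 0" using le by simp
    then show ?thesis using True by simp
  next
    case False
    have "Ih Xs \<psi> / Fh \<psi> * Fh \<psi> = Ih Xs \<psi> * (Fh \<psi> / Fh \<psi>)" by (rule ennreal_divide_times)
    also have "Fh \<psi> / Fh \<psi> = 1" using False Fh_fin[OF psi] by simp
    finally show ?thesis by (simp add: mult.assoc)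
  qed
qed

lemma part2:
  assumes Xs: "Xs \<in> sets Zh" and B: "B \<in> sets Psi"
  shows "emeasure PP (Xs \<times> B) = (\<integral>\<^sup>+\<psi>. indicator B \<psi> * (Ih Xs \<psi> / Fh \<psi>) \<partial>distr PP Psi snd)"
proof -
  have XB: "Xs \<times> B \<in> sets (Zh \<Otimes>\<^sub>M Psi)" using Xs B by simp
  have Im: "(\<lambda>z. indicator (Xs \<times> B) z :: ennreal) \<in> borel_measurable (Zh \<Otimes>\<^sub>M Psi)" using XB by simp
  have Am: "(\<lambda>X. indicator Xs X :: ennreal) \<in> borel_measurable Zh" using Xs by simp
  have Bm: "(\<lambda>\<psi>. indicator B \<psi> :: ennreal) \<in> borel_measurable Psi" using B by simp
  have Gm: "(\<lambda>\<psi>. indicator B \<psi> * (Ih Xs \<psi> / Fh \<psi>)) \<in> borel_measurable Psi"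
    using Bm Ih_meas[OF Xs] Fh_meas1 by measurable
  have XB': "Xs \<times> B \<in> sets PP" using XB by (simp only: PP_sets)
  have "emeasure PP (Xs \<times> B) = (\<integral>\<^sup>+z. indicator (Xs \<times> B) z \<partial>PP)"
    by (rule nn_integral_indicator[symmetric, OF XB'])
  also have "\<dots> = Cst * Phi (indicator (Xs \<times> B))"
    by (simp only: PP_int[OF Im] mult.assoc)
  also have "indicator (Xs \<times> B) = (\<lambda>z. indicator Xs (fst z) * (indicator B (snd z) :: ennreal))"
    by (rule ext) (rule indicator_times)
  also have "Phi \<dots> = (\<Sum>n. ennreal (T ^ n / fact n) * (\<integral>\<^sup>+u. indicator B (en (n, u)) * Ih Xs (en (n, u)) \<partial>U))"
    by (rule Phi_prod[OF Am Bm])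
  also have "\<dots> = (\<Sum>n. ennreal (T ^ n / fact n) * (\<integral>\<^sup>+u. indicator B (en (n, u)) * (Ih Xs (en (n, u)) / Fh (en (n, u))) * Fh (en (n, u)) \<partial>U))"
  proof (rule suminf_cong, rule arg_cong[where f="\<lambda>x. ennreal (T ^ n / fact n) * x" for n], rule nn_integral_cong)
    fix n u assume "u \<in> space U"
    then have "en (n, u) \<in> Om T" by (rule enum_in_Om)
    then show "indicator B (en (n, u)) * Ih Xs (en (n, u)) = indicator B (en (n, u)) * (Ih Xs (en (n, u)) / Fh (en (n, u))) * Fh (en (n, u))"
      by (rule ratio_times[symmetric])
  qed
  also have "Cst * \<dots> = (\<integral>\<^sup>+\<psi>. indicator B \<psi> * (Ih Xs \<psi> / Fh \<psi>) \<partial>distr PP Psi snd)"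
    by (rule Ppsi_int[OF Gm, symmetric])
  finally show ?thesis .
qed

lemma part1: "AE \<psi> in distr PP Psi snd. 0 < Fh \<psi> \<and> Fh \<psi> < \<infinity>"
proof (rule AE_I')
  let ?Z = "Fh -` {0} \<inter> space Psi"
  have Z: "?Z \<in> sets Psi" using measurable_sets[OF Fh_meas1, of "{0}"] by simp
  have Zm: "(\<lambda>\<psi>. indicator ?Z \<psi> :: ennreal) \<in> borel_measurable Psi" using Z by simp
  have "emeasure (distr PP Psi snd) ?Z = (\<integral>\<^sup>+\<psi>. indicator ?Z \<psi> \<partial>distr PP Psi snd)"
    using Z by simp
  also have "\<dots> = Cst * (\<Sum>n. ennreal (T ^ n / fact n) * (\<integral>\<^sup>+u. indicator ?Z (en (n, u)) * Fh (en (n, u)) \<partial>U))"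
    by (rule Ppsi_int[OF Zm])
  also have "(\<Sum>n. ennreal (T ^ n / fact n) * (\<integral>\<^sup>+u. indicator ?Z (en (n, u)) * Fh (en (n, u)) \<partial>U)) = (\<Sum>n. 0)"
  proof (rule suminf_cong)
    fix n
    have "(\<integral>\<^sup>+u. indicator ?Z (en (n, u)) * Fh (en (n, u)) \<partial>U) = (\<integral>\<^sup>+u. 0 \<partial>U)"
      by (rule nn_integral_cong) (simp add: indicator_def)
    then show "ennreal (T ^ n / fact n) * (\<integral>\<^sup>+u. indicator ?Z (en (n, u)) * Fh (en (n, u)) \<partial>U) = 0" by simp
  qed
  finally have "emeasure (distr PP Psi snd) ?Z = 0" by simp
  then show "?Z \<in> null_sets (distr PP Psi snd)" using Z by (auto intro: null_setsI)
  show "{\<psi> \<in> space (distr PP Psi snd). \<not> (0 < Fh \<psi> \<and> Fh \<psi> < \<infinity>)} \<subseteq> ?Z"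
  proof
    fix \<psi> assume a: "\<psi> \<in> {\<psi> \<in> space (distr PP Psi snd). \<not> (0 < Fh \<psi> \<and> Fh \<psi> < \<infinity>)}"
    then have sp: "\<psi> \<in> space Psi" by simp
    then have "Fh \<psi> < \<infinity>" using Fh_fin psi_space_space by blast
    then have "Fh \<psi> = 0" using a by (simp add: not_gr_zero)
    then show "\<psi> \<in> ?Z" using sp by simp
  qed
qed

end



lemma deriv_meas:
  fixes \<alpha> \<alpha>' :: "real \<Rightarrow> real"
  assumes d: "\<And>x. (\<alpha> has_real_derivative \<alpha>' x) (at x)"
  shows "\<alpha>' \<in> borel_measurable borel"
proof (rule borel_measurable_LIMSEQ_real)
  have c: "continuous_on UNIV \<alpha>"
    using d by (intro continuous_at_imp_continuous_on) (auto intro: DERIV_isCont)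
  have am[measurable]: "\<alpha> \<in> borel_measurable borel" using c by (rule borel_measurable_continuous_onI)
  fix n :: nat
  show "(\<lambda>x. (\<alpha> (x + inverse (real (Suc n))) - \<alpha> x) / inverse (real (Suc n))) \<in> borel_measurable borel"
    by measurable
next
  fix x :: real
  have D: "((\<lambda>h. (\<alpha> (x + h) - \<alpha> x) / h) \<longlongrightarrow> \<alpha>' x) (at 0)"
    using d[of x] by (simp add: DERIV_def)
  have h: "filterlim (\<lambda>n. inverse (real (Suc n))) (at 0) sequentially"
    unfolding filterlim_at using LIMSEQ_inverse_real_of_nat by auto
  show "(\<lambda>n. (\<alpha> (x + inverse (real (Suc n))) - \<alpha> x) / inverse (real (Suc n))) \<longlonglongrightarrow> \<alpha>' x"
    using filterlim_compose[OF D h] by simp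
qed




theorem proposition1:
  fixes T :: real
    and \<alpha> \<alpha>' A h0 :: "real \<Rightarrow> real"
    and \<alpha>_low :: real
    and Zh :: "(real \<Rightarrow> real) measure"
    and S :: "real list" and ys :: "'y list" and l :: "'y \<Rightarrow> real \<Rightarrow> real"
    and Mf mf :: "(real \<Rightarrow> real) \<Rightarrow> real"
  defines "c \<equiv> \<integral>\<^sup>+ u1. \<integral>\<^sup>+ u2. ennreal (h0 u1 * exp (A u2 - A u1 - (u2 - u1)\<^sup>2 / (2 * T))) \<partial>lborel \<partial>lborel"
  defines "h \<equiv> (\<lambda>u1 u2. h0 u1 * exp (A u2 - A u1 - (u2 - u1)\<^sup>2 / (2 * T)) / enn2real c)"
  defines "\<phi> \<equiv> (\<lambda>x. (\<alpha> x ^ 2 + \<alpha>' x) / 2 - \<alpha>_low)"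
  defines "lY \<equiv> (\<lambda>X. \<Prod>i<length S. l (ys ! i) (X (S ! i)))"
  defines "\<Delta> \<equiv> (\<lambda>X. Mf X - mf X)"
  defines "Zplus \<equiv> normalize_measure (density Zh (\<lambda>X. ennreal (lY X)))"
  defines "P \<equiv> normalize_measure (Zplus \<bind> (\<lambda>X.
              distr (density (poisson_pp T (\<Delta> X))
                       (\<lambda>\<psi>. ennreal (exp (- mf X * T) * (\<Prod>g\<in>\<psi>. (Mf X - \<phi> (X g)) / \<Delta> X))))
                    (Zh \<Otimes>\<^sub>M psi_space T) (\<lambda>\<psi>. (X, \<psi>))))"
  defines "Ppsi \<equiv> distr P (psi_space T) snd"
  defines "f \<equiv> (\<lambda>X \<psi>. lY X * exp (- Mf X * T) * (\<Prod>g\<in>\<psi>. Mf X - \<phi> (X g)))"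
  assumes T_pos: "0 < T"
    and A_deriv: "\<And>x. (A has_real_derivative \<alpha> x) (at x)"
    and \<alpha>_deriv: "\<And>x. (\<alpha> has_real_derivative \<alpha>' x) (at x)"
    and h0_meas: "h0 \<in> borel_measurable borel"
    and h0_nonneg: "\<And>x. 0 \<le> h0 x"
    and h0_prob: "(\<integral>\<^sup>+ x. ennreal (h0 x) \<partial>lborel) = 1"
    and c_finite: "c < \<infinity>"
    and \<alpha>_low: "\<And>x. \<alpha>_low \<le> (\<alpha> x ^ 2 + \<alpha>' x) / 2"
    and Zh_sets: "sets Zh = sets (path_space T)"
    and Zh_space: "space Zh = space (path_space T)"
    and Zh_prob: "prob_space Zh"
    and Zh_fdd: "\<And>(n::nat) (t::nat \<Rightarrow> real). 1 \<le> n \<Longrightarrow> t 0 = 0 \<Longrightarrow> t n = T \<Longrightarrow>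
        (\<And>i. i < n \<Longrightarrow> t i < t (Suc i)) \<Longrightarrow>
        distr Zh (Pi\<^sub>M {..n} (\<lambda>_. borel)) (\<lambda>X. \<lambda>i\<in>{..n}. X (t i)) =
        density (Pi\<^sub>M {..n} (\<lambda>_. lborel))
          (\<lambda>x. ennreal (h (x 0) (x n) * (\<Prod>i<n. gauss_kernel (t (Suc i) - t i) (x (Suc i) - x i))
                        / gauss_kernel T (x n - x 0)))"
    and S_len: "length S = length ys" "S \<noteq> []"
    and S_ends: "S ! 0 = 0" "last S = T"
    and S_sorted: "sorted_wrt (<) S"
    and l_meas: "\<And>y. l y \<in> borel_measurable borel"
    and l_nonneg: "\<And>y x. 0 \<le> l y x"
    and lY_norm: "0 < (\<integral>\<^sup>+ X. ennreal (lY X) \<partial>Zh)" "(\<integral>\<^sup>+ X. ennreal (lY X) \<partial>Zh) < \<infinity>"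
    and Mf_meas: "Mf \<in> borel_measurable Zh"
    and mf_meas: "mf \<in> borel_measurable Zh"
    and bounds: "\<And>X t. X \<in> space Zh \<Longrightarrow> t \<in> {0..T} \<Longrightarrow>
        0 \<le> mf X \<and> mf X \<le> \<phi> (X t) \<and> \<phi> (X t) \<le> Mf X"
    and \<Delta>_pos: "\<And>X. X \<in> space Zh \<Longrightarrow> 0 < \<Delta> X"
  shows "(AE \<psi> in Ppsi. 0 < (\<integral>\<^sup>+ X. ennreal (f X \<psi>) \<partial>Zh) \<and> (\<integral>\<^sup>+ X. ennreal (f X \<psi>) \<partial>Zh) < \<infinity>)
       \<and> (\<forall>Xs \<in> sets Zh. \<forall>B \<in> sets (psi_space T).
            emeasure P (Xs \<times> B) =
              (\<integral>\<^sup>+ \<psi>. indicator B \<psi> *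
                  ((\<integral>\<^sup>+ X. indicator Xs X * ennreal (f X \<psi>) \<partial>Zh) / (\<integral>\<^sup>+ X. ennreal (f X \<psi>) \<partial>Zh)) \<partial>Ppsi))"
proof -
  have am[measurable]: "\<alpha> \<in> borel_measurable borel"
    using \<alpha>_deriv by (intro borel_measurable_continuous_onI continuous_at_imp_continuous_on) (auto intro: DERIV_isCont)
  have a'm[measurable]: "\<alpha>' \<in> borel_measurable borel" by (rule deriv_meas[OF \<alpha>_deriv])
  have phi_m: "\<phi> \<in> borel_measurable borel" unfolding \<phi>_def by measurable
  have ev[measurable]: "(\<lambda>X. X t) \<in> borel_measurable Zh" for t
    using eval_meas_const[of t T] measurable_cong_sets[OF Zh_sets refl] by blast
  have lm[measurable]: "l y \<in> borel_measurable borel" for y by (rule l_meas)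
  have lY_m: "lY \<in> borel_measurable Zh" unfolding lY_def by measurable
  have lY_nn: "0 \<le> lY X" for X unfolding lY_def by (intro prod_nonneg) (simp add: l_nonneg)
  have Dp: "\<And>X. X \<in> space Zh \<Longrightarrow> 0 < Mf X - mf X" using \<Delta>_pos unfolding \<Delta>_def .
  interpret core T Zh lY Mf mf \<phi>
    by (rule core.intro[OF T_pos Zh_sets Zh_space Zh_prob phi_m lY_m lY_nn lY_norm(2) Mf_meas mf_meas bounds Dp])
  show ?thesis
    unfolding Ppsi_def P_def Zplus_def f_def \<Delta>_def
    using part1 part2 by blast
qed



end
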